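(* With the following design of $F_A(x)=C_A(x)+S_A(x)$ and $F_B(x)=C_B(x)+S_B(x)$ in PolyDot-CMPC, the conditions C1, C2, C3 below are satisfied: $$F_A(x)=\begin{cases}F_{A_1}(x), & z>ts-t \text{ and } s,t\neq 1\\ F_{A_2}(x), & z\le ts-t \text{ or } t=1 \text{ or } s=1\end{cases}$$ $$F_{A_1}(x)=\underbrace{\sum_{i=0}^{t-1}\sum_{j=0}^{s-1}A_{i,j}x^{i+tj}}_{C_A(x)}+\sum_{w=0}^{ts-t-1}\sum_{l=0}^{p-1}\bar A_{(w+\theta' l)}x^{ts+\theta' l+w}+\sum_{u=0}^{z-1-pt(s-1)}\bar A_{(u+t(s-1)+\theta'(p-1))}x^{ts+\theta' p+u},$$ $$F_{A_2}(x)=\sum_{i=0}^{t-1}\sum_{j=0}^{s-1}A_{i,j}x^{i+tj}+\sum_{u=0}^{z-1}\bar A_u x^{ts+\theta' p+u},$$ $$F_B(x)=\begin{cases}F_{B_1}(x), & z>\tau \text{ or } t=1 \text{ or } s=1\\ F_{B_2}(x), & \frac{\tau+1}{2}<z\le\tau \text{ and } s,t\neq1\\ F_{B_3}(x), & z\le\frac{\tau+1}{2} \text{ and } s,t\neq 1\end{cases}$$ $$F_{B_1}(x)=\underbrace{\sum_{k=0}^{s-1}\sum_{l=0}^{t-1}B_{k,l}x^{t(s-1-k)+\theta' l}}_{C_B(x)}+\sum_{r=0}^{z-1}\bar B_r x^{ts+\theta'(t-1)+r},$$ $$F_{B_2}(x)=C_B(x)+\sum_{d=0}^{\tau-z}\sum_{l'=0}^{p'-1}\bar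 B_{(\theta' l'+d)}x^{ts+\theta' l'+d}+\sum_{v=0}^{z-1-p'(\tau-z+1)}\bar B_{(v+\tau-z+1+\theta'(p'-1))}x^{ts+\theta' p'+v},$$ $$F_{B_3}(x)=C_B(x)+\sum_{v=0}^{z-1}\bar B_v x^{ts+v},$$ where $\theta'=t(2s-1)$, $p=\min\{\lfloor\frac{z-1}{ts-t}\rfloor,t-1\}$, $\tau=\theta'-ts-t$, $p'=\min\{\lfloor\frac{z-1}{\tau-z+1}\rfloor,t-1\}$. The conditions are: for all $i,l\in\{0,\dots,t-1\}$, C1: $i+t(s-1)+tl(2s-1)\notin \mathbf{P}(S_A(x))+\mathbf{P}(C_B(x))$; C2: $i+t(s-1)+tl(2s-1)\notin \mathbf{P}(S_A(x))+\mathbf{P}(S_B(x))$; C3: $i+t(s-1)+tl(2s-1)\notin \mathbf{P}(S_B(x))+\mathbf{P}(C_A(x))$.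
   Context: Two sources hold private matrices $A,B\in\mathbb{F}^{m\times m}$ over a finite field $\mathbb{F}$; the goal is to compute $Y=A^TB$ with help of $N$ workers, $z$ of which may collude. Each matrix is split into $s$ row-wise and $t$ column-wise partitions ($s,t\in\mathbb{N}$, $s|m$, $t|m$, excluding $s=t=1$); $A_{i,j}$ ($i\in\{0,\dots,t-1\}$, $j\in\{0,\dots,s-1\}$) are blocks of $A^T$ and $B_{k,l}$ ($k\in\{0,\dots,s-1\}$, $l\in\{0,\dots,t-1\}$) are blocks of $B$. For a polynomial $f(x)=\sum_i a_ix^i$, $\mathbf{P}(f(x))$ is the set of exponents $i$ with $a_i\neq 0$; for integer sets, $\mathbf{A}+\mathbf{B}=\{a+b: a\in\mathbf{A}, b\in\mathbf{B}\}$. The terms $C_A,C_B$ are the PolyDot coded terms and $S_A,S_B$ the secret terms; the exponents $i+t(s-1)+tl(2s-1)$, $i,l\in\{0,\dots,t-1\}$, are the "important powers" of $C_A(x)C_B(x)$, whose coefficients $\sum_{j}A_{i,j}B_{j,l}$ form $Y$. The coefficients $\bar A_{(\cdot)}$ are chosen independently and uniformly at random in $\mathbb{F}^{\frac{m}{t}\times\frac{m}{s}}$, and $\bar B_{(\cdot)}$ independently and uniformly at random in $\mathbb{F}^{\frac{m}{s}\times\frac{m}{t}}$. *)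

theory Defs
  imports "HOL-Analysis.Analysis" "HOL-Computational_Algebra.Polynomial"
begin

definition exps :: "'a::zero poly \<Rightarrow> nat set" where
  "exps f = {i. coeff f i \<noteq> 0}"

definition sumset :: "nat set \<Rightarrow> nat set \<Rightarrow> nat set" where
  "sumset X Y = {a + b | a b. a \<in> X \<and> b \<in> Y}"

text \<open>Parameters: theta' = t(2s-1), p, tau = theta' - ts - t, p'.
  When ts - t = 0 (i.e. s = 1) the quotient (z-1)/(ts-t) is read as +infinity, so p = t-1.\<close>

definition theta' :: "nat \<Rightarrow> nat \<Rightarrow> nat" where
  "theta' s t = t * (2 * s - 1)"

definition pA :: "nat \<Rightarrow> nat \<Rightarrow> nat \<Rightarrow> nat" where
  "pA s t z = (if t * s - t = 0 then t - 1 else min ((z - 1) div (t * s - t)) (t - 1))"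

definition tau :: "nat \<Rightarrow> nat \<Rightarrow> nat" where
  "tau s t = theta' s t - t * s - t"

definition pB :: "nat \<Rightarrow> nat \<Rightarrow> nat \<Rightarrow> nat" where
  "pB s t z = min ((z - 1) div (tau s t - z + 1)) (t - 1)"

definition CA :: "nat \<Rightarrow> nat \<Rightarrow> (nat \<Rightarrow> nat \<Rightarrow> 'a::comm_monoid_add) \<Rightarrow> 'a poly" where
  "CA s t A = (\<Sum>i<t. \<Sum>j<s. monom (A i j) (i + t * j))"

definition CB :: "nat \<Rightarrow> nat \<Rightarrow> (nat \<Rightarrow> nat \<Rightarrow> 'a::comm_monoid_add) \<Rightarrow> 'a poly" where
  "CB s t B = (\<Sum>k<s. \<Sum>l<t. monom (B k l) (t * (s - 1 - k) + theta' s t * l))"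

definition SA1 :: "nat \<Rightarrow> nat \<Rightarrow> nat \<Rightarrow> (nat \<Rightarrow> 'a::comm_monoid_add) \<Rightarrow> 'a poly" where
  "SA1 s t z Ab =
     (\<Sum>w<t * s - t. \<Sum>l<pA s t z.
         monom (Ab (w + theta' s t * l)) (t * s + theta' s t * l + w))
   + (\<Sum>u<z - pA s t z * t * (s - 1).
         monom (Ab (u + t * (s - 1) + theta' s t * (pA s t z - 1))) (t * s + theta' s t * pA s t z + u))"

definition SA2 :: "nat \<Rightarrow> nat \<Rightarrow> nat \<Rightarrow> (nat \<Rightarrow> 'a::comm_monoid_add) \<Rightarrow> 'a poly" where
  "SA2 s t z Ab = (\<Sum>u<z. monom (Ab u) (t * s + theta' s t * pA s t z + u))"

definition SA :: "nat \<Rightarrow> nat \<Rightarrow> nat \<Rightarrow> (nat \<Rightarrow> 'a::comm_monoid_add) \<Rightarrow> 'a poly" where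
  "SA s t z Ab = (if z > t * s - t \<and> s \<noteq> 1 \<and> t \<noteq> 1 then SA1 s t z Ab else SA2 s t z Ab)"

definition SB1 :: "nat \<Rightarrow> nat \<Rightarrow> nat \<Rightarrow> (nat \<Rightarrow> 'a::comm_monoid_add) \<Rightarrow> 'a poly" where
  "SB1 s t z Bb = (\<Sum>r<z. monom (Bb r) (t * s + theta' s t * (t - 1) + r))"

definition SB2 :: "nat \<Rightarrow> nat \<Rightarrow> nat \<Rightarrow> (nat \<Rightarrow> 'a::comm_monoid_add) \<Rightarrow> 'a poly" where
  "SB2 s t z Bb =
     (\<Sum>d<tau s t - z + 1. \<Sum>l'<pB s t z.
         monom (Bb (theta' s t * l' + d)) (t * s + theta' s t * l' + d))
   + (\<Sum>v<z - pB s t z * (tau s t - z + 1).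
         monom (Bb (v + (tau s t - z + 1) + theta' s t * (pB s t z - 1)))
               (t * s + theta' s t * pB s t z + v))"

definition SB3 :: "nat \<Rightarrow> nat \<Rightarrow> nat \<Rightarrow> (nat \<Rightarrow> 'a::comm_monoid_add) \<Rightarrow> 'a poly" where
  "SB3 s t z Bb = (\<Sum>v<z. monom (Bb v) (t * s + v))"

definition SB :: "nat \<Rightarrow> nat \<Rightarrow> nat \<Rightarrow> (nat \<Rightarrow> 'a::comm_monoid_add) \<Rightarrow> 'a poly" where
  "SB s t z Bb =
     (if z > tau s t \<or> t = 1 \<or> s = 1 then SB1 s t z Bb
      else if real (tau s t + 1) / 2 < real z then SB2 s t z Bb
      else SB3 s t z Bb)"

definition FA :: "nat \<Rightarrow> nat \<Rightarrow> nat \<Rightarrow> (nat \<Rightarrow> nat \<Rightarrow> 'a::comm_monoid_add) \<Rightarrow> (nat \<Rightarrow> 'a) \<Rightarrow> 'a poly" where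
  "FA s t z A Ab = CA s t A + SA s t z Ab"

definition FB :: "nat \<Rightarrow> nat \<Rightarrow> nat \<Rightarrow> (nat \<Rightarrow> nat \<Rightarrow> 'a::comm_monoid_add) \<Rightarrow> (nat \<Rightarrow> 'a) \<Rightarrow> 'a poly" where
  "FB s t z B Bb = CB s t B + SB s t z Bb"

end

theory Submission
  imports Defs
begin

lemma exps_sum: "e \<in> exps (\<Sum>a\<in>A. f a) \<Longrightarrow> \<exists>a\<in>A. e \<in> exps (f a)"
  unfolding exps_def by (auto simp: coeff_sum intro: ccontr dest: sum.neutral)

lemma exps_add: "e \<in> exps (p + q) \<Longrightarrow> e \<in> exps p \<or> e \<in> exps q"
  unfolding exps_def by auto

lemma exps_monom: "e \<in> exps (monom c m) \<Longrightarrow> e = m"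
  unfolding exps_def by (auto simp: coeff_monom split: if_splits)

lemma theta_eq: "1 \<le> s \<Longrightarrow> theta' s t = t * s + (t * s - t)"
proof -
  assume "1 \<le> s"
  then have "2 * s - 1 = s + (s - 1)" by simp
  then have "theta' s t = t * s + t * (s-1)" unfolding theta'_def by (simp add: algebra_simps)
  then show ?thesis by (simp add: diff_mult_distrib2)
qed

lemma ts_ge: "1 \<le> (s::nat) \<Longrightarrow> t \<le> t * s" using mult_le_mono2[of 1 s t] by simp

lemma notimp:
  assumes "1 \<le> s" "n = theta' s t * q + r" "r < theta' s t" "r < t * s - t \<or> t * s \<le> r"
  shows "\<not>(\<exists>i<t. \<exists>l<t. n = i + t * (s-1) + t * l*(2 * s-1))"
proof
  assume "\<exists>i<t. \<exists>l<t. n = i + t * (s-1) + t * l*(2 * s-1)"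
  then obtain i l where il: "i < t" "l < t" "n = i + t * (s-1) + t * l*(2 * s-1)" by blast
  have ts: "t * (s-1) = t * s - t" by (simp add: diff_mult_distrib2)
  have th: "theta' s t = t * s + (t * s - t)" using theta_eq assms(1) by blast
  have t1: "t \<le> t * s" using assms(1) by (rule ts_ge)
  have n2: "n = theta' s t * l + (i + t * (s-1))" using il(3) unfolding theta'_def by (simp add: algebra_simps)
  have lt: "i + t * (s-1) < theta' s t" using il(1) ts th t1 by linarith
  have "n mod theta' s t = r" using assms(2,3) by simp
  moreover have "n mod theta' s t = i + t * (s-1)" using n2 lt by simp
  ultimately have "r = i + t * s - t" using ts t1 by linarith
  then show False using assms(4) il(1) t1 by linarith
qed

lemma notimp2:
  assumes "1 \<le> s" "n = theta' s t * q + r" "theta' s t \<le> r" "r < theta' s t + (t * s - t)"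
  shows "\<not>(\<exists>i<t. \<exists>l<t. n = i + t * (s-1) + t * l*(2 * s-1))"
proof -
  have th: "theta' s t = t * s + (t * s - t)" using theta_eq assms(1) by blast
  have "n = theta' s t * (q+1) + (r - theta' s t)" using assms(2,3) by (simp add: algebra_simps)
  moreover have "r - theta' s t < theta' s t" "r - theta' s t < t * s - t" using assms(3,4) th by arith+
  ultimately show ?thesis using notimp[OF assms(1)] by blast
qed

lemma bignotimp:
  assumes "1 \<le> s" "t * s + theta' s t * (t-1) \<le> n"
  shows "\<not>(\<exists>i<t. \<exists>l<t. n = i + t * (s-1) + t * l*(2 * s-1))"
proof
  assume "\<exists>i<t. \<exists>l<t. n = i + t * (s-1) + t * l*(2 * s-1)"
  then obtain i l where il: "i < t" "l < t" "n = i + t * (s-1) + t * l*(2 * s-1)" by blast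
  have ts: "t * (s-1) = t * s - t" by (simp add: diff_mult_distrib2)
  have t1: "t \<le> t * s" using assms(1) by (rule ts_ge)
  have n2: "n = theta' s t * l + (i + t * (s-1))" using il(3) unfolding theta'_def by (simp add: algebra_simps)
  have "theta' s t * l \<le> theta' s t * (t-1)" using il(2) by (intro mult_le_mono2) simp
  then show False using n2 assms(2) il(1) ts t1 by linarith
qed

lemma CA_exps: assumes "e \<in> exps (CA s t A)" shows "e < t * s"
proof -
  from assms have "\<exists>i\<in>{..<t}. e \<in> exps (\<Sum>j<s. monom (A i j) (i + t * j))"
    unfolding CA_def by (rule exps_sum)
  then obtain i where i: "i < t" "e \<in> exps (\<Sum>j<s. monom (A i j) (i + t * j))" by blast
  from i(2) have "\<exists>j\<in>{..<s}. e \<in> exps (monom (A i j) (i + t * j))" by (rule exps_sum)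
  then obtain j where j: "j < s" "e = i + t * j" by (blast dest: exps_monom)
  have "t * (j + 1) \<le> t * s" using j(1) by (intro mult_le_mono2) simp
  then show ?thesis using i(1) j(2) by simp
qed

lemma CB_exps: assumes "1 \<le> s" "e \<in> exps (CB s t B)"
  shows "\<exists>l c. e = theta' s t * l + c \<and> c \<le> t * s - t"
proof -
  from assms(2) have "\<exists>k\<in>{..<s}. e \<in> exps (\<Sum>l<t. monom (B k l) (t * (s - 1 - k) + theta' s t * l))"
    unfolding CB_def by (rule exps_sum)
  then obtain k where k: "k < s" "e \<in> exps (\<Sum>l<t. monom (B k l) (t * (s - 1 - k) + theta' s t * l))" by blast
  from k(2) have "\<exists>l\<in>{..<t}. e \<in> exps (monom (B k l) (t * (s - 1 - k) + theta' s t * l))" by (rule exps_sum)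
  then obtain l where l: "e = t * (s - 1 - k) + theta' s t * l" by (blast dest: exps_monom)
  have "t * (s - 1 - k) \<le> t * (s - 1)" by (intro mult_le_mono2) simp
  also have "\<dots> = t * s - t" by (simp add: diff_mult_distrib2)
  finally show ?thesis using l by (metis add.commute)
qed

lemma SA_exps:
  assumes "1 \<le> s" "1 \<le> t" "e \<in> exps (SA s t z Ab)"
  shows "(\<exists>q r. e = theta' s t * q + r \<and> t * s \<le> r \<and> r < theta' s t) \<or> t * s + theta' s t * (t - 1) \<le> e"
proof (cases "z > t * s - t \<and> s \<noteq> 1 \<and> t \<noteq> 1")
  case True
  have th: "theta' s t = t * s + (t * s - t)" using theta_eq assms(1) by blast
  define D where "D = t * s - t"
  have "t * 2 \<le> t * s" using True assms(1) by (intro mult_le_mono2) simp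
  then have D0: "D \<noteq> 0" using True assms(2) unfolding D_def by simp
  have pA: "pA s t z = min ((z - 1) div D) (t - 1)" unfolding pA_def D_def using D0 D_def by simp
  have D2: "pA s t z * t * (s - 1) = pA s t z * D" unfolding D_def by (simp add: diff_mult_distrib2)
  from assms(3) True have "e \<in> exps (SA1 s t z Ab)" unfolding SA_def by simp
  then have "e \<in> exps (\<Sum>w<t * s - t. \<Sum>l<pA s t z.
         monom (Ab (w + theta' s t * l)) (t * s + theta' s t * l + w))
   \<or> e \<in> exps (\<Sum>u<z - pA s t z * D.
         monom (Ab (u + t * (s - 1) + theta' s t * (pA s t z - 1))) (t * s + theta' s t * pA s t z + u))"
    unfolding SA1_def D2 by (rule exps_add)
  then show ?thesis
  proof
    assume "e \<in> exps (\<Sum>w<t * s - t. \<Sum>l<pA s t z.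
         monom (Ab (w + theta' s t * l)) (t * s + theta' s t * l + w))"
    then obtain w l where "w < t * s - t" "e = t * s + theta' s t * l + w"
      by (auto dest!: exps_sum exps_monom)
    then show ?thesis using th by (intro disjI1 exI[of _ l] exI[of _ "t * s + w"]) simp
  next
    assume "e \<in> exps (\<Sum>u<z - pA s t z * D.
         monom (Ab (u + t * (s - 1) + theta' s t * (pA s t z - 1))) (t * s + theta' s t * pA s t z + u))"
    then obtain u where u: "u < z - pA s t z * D" "e = t * s + theta' s t * pA s t z + u"
      by (auto dest!: exps_sum exps_monom)
    show ?thesis
    proof (cases "pA s t z = t - 1")
      case True then show ?thesis using u by simp
    next
      case False
      then have p: "pA s t z = (z - 1) div D" using pA by linarith
      have "z - 1 < ((z - 1) div D + 1) * D" using D0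
        by (metis add.commute div_mult_mod_eq mod_less_divisor nat_add_left_cancel_less
              distrib_right mult_1 neq0_conv)
      then have "u < D" using u(1) p by (simp add: algebra_simps)
      then show ?thesis using u(2) th D_def
        by (intro disjI1 exI[of _ "pA s t z"] exI[of _ "t * s + u"]) simp
    qed
  qed
next
  case False
  have "SA s t z Ab = SA2 s t z Ab" unfolding SA_def using False by (rule if_not_P)
  with assms(3) have "e \<in> exps (SA2 s t z Ab)" by simp
  then obtain u where u: "u < z" "e = t * s + theta' s t * pA s t z + u"
    unfolding SA2_def by (auto dest!: exps_sum exps_monom)
  have th: "theta' s t = t * s + (t * s - t)" using theta_eq assms(1) by blast
  show ?thesis
  proof (cases "s = 1 \<or> t = 1")
    case True
    then have "pA s t z = t - 1" unfolding pA_def by auto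
    then show ?thesis using u by simp
  next
    case nst: False
    then have zz: "z \<le> t * s - t" using False by auto
    then have "(z - 1) div (t * s - t) = 0" by (cases z) (auto intro: div_less)
    moreover have "t * 2 \<le> t * s" using nst assms(1) by (intro mult_le_mono2) simp
    ultimately have "pA s t z = 0" unfolding pA_def using assms(2) by simp
    then show ?thesis using u zz th by (intro disjI1 exI[of _ 0] exI[of _ "t * s + u"]) simp
  qed
qed

lemma tau_eq: "1 \<le> s \<Longrightarrow> tau s t = t * s - t - t"
  unfolding tau_def using theta_eq by simp

lemma SA_exps_small:
  assumes "2 \<le> s" "2 \<le> t" "z \<le> tau s t" "e \<in> exps (SA s t z Ab)"
  shows "\<exists>u<z. e = t * s + u"
proof -
  have zz: "z \<le> t * s - t" using assms(1,3) tau_eq[of s t] by simp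
  have "SA s t z Ab = SA2 s t z Ab" unfolding SA_def using zz by simp
  with assms(4) have "e \<in> exps (SA2 s t z Ab)" by simp
  then obtain u where u: "u < z" "e = t * s + theta' s t * pA s t z + u"
    unfolding SA2_def by (auto dest!: exps_sum exps_monom)
  have "(z - 1) div (t * s - t) = 0" using zz by (cases z) (auto intro: div_less)
  moreover have "t * 2 \<le> t * s" using assms(1) by (intro mult_le_mono2) simp
  ultimately have "pA s t z = 0" unfolding pA_def using assms(2) by simp
  then show ?thesis using u by simp
qed

lemma SB_exps:
  assumes "1 \<le> s" "1 \<le> t" "e \<in> exps (SB s t z Bb)"
  shows "t * s + theta' s t * (t - 1) \<le> e \<or>
    (z \<le> tau s t \<and> 2 \<le> s \<and> 2 \<le> t \<and> (\<exists>q d. e = theta' s t * q + t * s + d \<and> d + z \<le> tau s t))"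
proof (cases "z > tau s t \<or> t = 1 \<or> s = 1")
  case True
  then have "SB s t z Bb = SB1 s t z Bb" unfolding SB_def by simp
  with assms(3) have "e \<in> exps (SB1 s t z Bb)" by simp
  then obtain r where "e = t * s + theta' s t * (t - 1) + r"
    unfolding SB1_def by (auto dest!: exps_sum exps_monom)
  then show ?thesis by simp
next
  case False
  then have c: "z \<le> tau s t" "2 \<le> s" "2 \<le> t" using assms by auto
  show ?thesis
  proof (cases "real (tau s t + 1) / 2 < real z")
    case True
    define m where "m = tau s t - z + 1"
    have "SB s t z Bb = SB2 s t z Bb" unfolding SB_def using False True by simp
    with assms(3) have "e \<in> exps (\<Sum>d<m. \<Sum>l'<pB s t z.
         monom (Bb (theta' s t * l' + d)) (t * s + theta' s t * l' + d))
      \<or> e \<in> exps (\<Sum>v<z - pB s t z * m.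
         monom (Bb (v + m + theta' s t * (pB s t z - 1)))
               (t * s + theta' s t * pB s t z + v))"
      unfolding SB2_def m_def by (intro exps_add) simp
    then show ?thesis
    proof
      assume "e \<in> exps (\<Sum>d<m. \<Sum>l'<pB s t z.
         monom (Bb (theta' s t * l' + d)) (t * s + theta' s t * l' + d))"
      then obtain d l where "d < m" "e = t * s + theta' s t * l + d"
        by (auto dest!: exps_sum exps_monom)
      then show ?thesis using c m_def by (intro disjI2 conjI exI[of _ l] exI[of _ d]) auto
    next
      assume "e \<in> exps (\<Sum>v<z - pB s t z * m.
         monom (Bb (v + m + theta' s t * (pB s t z - 1)))
               (t * s + theta' s t * pB s t z + v))"
      then obtain v where v: "v < z - pB s t z * m" "e = t * s + theta' s t * pB s t z + v"
        by (auto dest!: exps_sum exps_monom)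
      show ?thesis
      proof (cases "pB s t z = t - 1")
        case True then show ?thesis using v by simp
      next
        case False
        have m0: "m \<noteq> 0" unfolding m_def by simp
        have p: "pB s t z = (z - 1) div m" using False unfolding pB_def m_def by linarith
        have "z - 1 < ((z - 1) div m + 1) * m" using m0
          by (metis add.commute div_mult_mod_eq mod_less_divisor nat_add_left_cancel_less
                distrib_right mult_1 neq0_conv)
        then have "v < m" using v(1) p by (simp add: algebra_simps)
        then show ?thesis using v(2) c m_def
          by (intro disjI2 conjI exI[of _ "pB s t z"] exI[of _ v]) auto
      qed
    qed
  next
    case False2: False
    have "SB s t z Bb = SB3 s t z Bb" unfolding SB_def using False False2 by simp
    with assms(3) have "e \<in> exps (SB3 s t z Bb)" by simp
    then obtain v where v: "v < z" "e = t * s + v"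
      unfolding SB3_def by (auto dest!: exps_sum exps_monom)
    have "real (2 * z) \<le> real (tau s t + 1)" using False2 by simp
    then have "2 * z \<le> tau s t + 1" by (simp only: of_nat_le_iff)
    then show ?thesis using v c by (intro disjI2 conjI exI[of _ 0] exI[of _ v]) auto
  qed
qed

lemma C1:
  assumes "1 \<le> s" "1 \<le> t" "n \<in> sumset (exps (SA s t z Ab)) (exps (CB s t B))"
  shows "\<not>(\<exists>i<t. \<exists>l<t. n = i + t * (s-1) + t * l * (2 * s-1))"
proof -
  obtain a b where ab: "a \<in> exps (SA s t z Ab)" "b \<in> exps (CB s t B)" "n = a + b"
    using assms(3) unfolding sumset_def by blast
  obtain l2 c where b: "b = theta' s t * l2 + c" "c \<le> t * s - t" using CB_exps[OF assms(1) ab(2)] by blast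
  have th: "theta' s t = t * s + (t * s - t)" using theta_eq assms(1) by blast
  from SA_exps[OF assms(1,2) ab(1)] show ?thesis
  proof
    assume "\<exists>q r. a = theta' s t * q + r \<and> t * s \<le> r \<and> r < theta' s t"
    then obtain q r where a: "a = theta' s t * q + r" "t * s \<le> r" "r < theta' s t" by blast
    have n: "n = theta' s t * (q + l2) + (r + c)" using ab(3) a b by (simp add: algebra_simps)
    show ?thesis
    proof (cases "r + c < theta' s t")
      case True then show ?thesis using notimp[OF assms(1) n] a by simp
    next
      case False then show ?thesis using notimp2[OF assms(1) n] a b th by simp
    qed
  next
    assume "t * s + theta' s t * (t - 1) \<le> a"
    then show ?thesis using bignotimp[OF assms(1)] ab(3) by simp
  qed
qed

lemma C2:
  assumes "1 \<le> s" "1 \<le> t" "n \<in> sumset (exps (SA s t z Ab)) (exps (SB s t z Bb))"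
  shows "\<not>(\<exists>i<t. \<exists>l<t. n = i + t * (s-1) + t * l * (2 * s-1))"
proof -
  obtain a b where ab: "a \<in> exps (SA s t z Ab)" "b \<in> exps (SB s t z Bb)" "n = a + b"
    using assms(3) unfolding sumset_def by blast
  have th: "theta' s t = t * s + (t * s - t)" using theta_eq assms(1) by blast
  from SB_exps[OF assms(1,2) ab(2)] show ?thesis
  proof
    assume "t * s + theta' s t * (t - 1) \<le> b"
    then show ?thesis using bignotimp[OF assms(1)] ab(3) by simp
  next
    assume "z \<le> tau s t \<and> 2 \<le> s \<and> 2 \<le> t \<and> (\<exists>q d. b = theta' s t * q + t * s + d \<and> d + z \<le> tau s t)"
    then obtain q d where c: "z \<le> tau s t" "2 \<le> s" "2 \<le> t" "b = theta' s t * q + t * s + d" "d + z \<le> tau s t"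
      by blast
    obtain u where u: "u < z" "a = t * s + u" using SA_exps_small[OF c(2,3,1) ab(1)] by blast
    have tau: "tau s t = t * s - t - t" using tau_eq assms(1) by blast
    have "t * 2 \<le> t * s" using c(2) by (intro mult_le_mono2) simp
    moreover have "theta' s t * (q + 1) = theta' s t * q + theta' s t" by simp
    ultimately have n: "n = theta' s t * (q + 1) + (t + d + u)" using ab(3) u c(4) th by linarith
    have "t + d + u < t * s - t" "t + d + u < theta' s t" using u c(5) tau th \<open>t * 2 \<le> t * s\<close> by linarith+
    then show ?thesis using notimp[OF assms(1) n] by simp
  qed
qed

lemma C3:
  assumes "1 \<le> s" "1 \<le> t" "n \<in> sumset (exps (SB s t z Bb)) (exps (CA s t A))"
  shows "\<not>(\<exists>i<t. \<exists>l<t. n = i + t * (s-1) + t * l * (2 * s-1))"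
proof -
  obtain a b where ab: "b \<in> exps (SB s t z Bb)" "a \<in> exps (CA s t A)" "n = b + a"
    using assms(3) unfolding sumset_def by blast
  have th: "theta' s t = t * s + (t * s - t)" using theta_eq assms(1) by blast
  have a: "a < t * s" using CA_exps[OF ab(2)] .
  from SB_exps[OF assms(1,2) ab(1)] show ?thesis
  proof
    assume "t * s + theta' s t * (t - 1) \<le> b"
    then show ?thesis using bignotimp[OF assms(1)] ab(3) by simp
  next
    assume "z \<le> tau s t \<and> 2 \<le> s \<and> 2 \<le> t \<and> (\<exists>q d. b = theta' s t * q + t * s + d \<and> d + z \<le> tau s t)"
    then obtain q d where c: "z \<le> tau s t" "2 \<le> s" "2 \<le> t" "b = theta' s t * q + t * s + d" "d + z \<le> tau s t"
      by blast
    have tau: "tau s t = t * s - t - t" using tau_eq assms(1) by blast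
    have n: "n = theta' s t * q + (t * s + d + a)" using ab(3) c(4) by simp
    show ?thesis
    proof (cases "t * s + d + a < theta' s t")
      case True then show ?thesis using notimp[OF assms(1) n] by simp
    next
      case False
      have "t * 2 \<le> t * s" using c(2) by (intro mult_le_mono2) simp
      then have "t * s + d + a < theta' s t + (t * s - t)" using a c(5) tau th by linarith
      then show ?thesis using notimp2[OF assms(1) n] False by simp
    qed
  qed
qed

theorem theorem1:
  fixes s t z :: nat
    and A :: "nat \<Rightarrow> nat \<Rightarrow> 'f::{field,finite} ^ 'q ^ 'p"
    and Ab :: "nat \<Rightarrow> 'f ^ 'q ^ 'p"
    and B :: "nat \<Rightarrow> nat \<Rightarrow> 'f ^ 'p ^ 'q"
    and Bb :: "nat \<Rightarrow> 'f ^ 'p ^ 'q"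
  assumes "1 \<le> s" and "1 \<le> t" and "\<not> (s = 1 \<and> t = 1)"
  shows "\<forall>i<t. \<forall>l<t.
           i + t * (s - 1) + t * l * (2 * s - 1) \<notin> sumset (exps (SA s t z Ab)) (exps (CB s t B))
         \<and> i + t * (s - 1) + t * l * (2 * s - 1) \<notin> sumset (exps (SA s t z Ab)) (exps (SB s t z Bb))
         \<and> i + t * (s - 1) + t * l * (2 * s - 1) \<notin> sumset (exps (SB s t z Bb)) (exps (CA s t A))"
proof (intro allI impI conjI)
  fix i l assume il: "i < t" "l < t"
  then have ex: "\<exists>i'<t. \<exists>l'<t. i + t * (s - 1) + t * l * (2 * s - 1) = i' + t * (s-1) + t * l' * (2 * s-1)"
    by blast
  show "i + t * (s - 1) + t * l * (2 * s - 1) \<notin> sumset (exps (SA s t z Ab)) (exps (CB s t B))"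
    using C1[OF assms(1,2)] ex by blast
  show "i + t * (s - 1) + t * l * (2 * s - 1) \<notin> sumset (exps (SA s t z Ab)) (exps (SB s t z Bb))"
    using C2[OF assms(1,2)] ex by blast
  show "i + t * (s - 1) + t * l * (2 * s - 1) \<notin> sumset (exps (SB s t z Bb)) (exps (CA s t A))"
    using C3[OF assms(1,2)] ex by blast
qed

end
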